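(* For a given state space, prior structure and signal structure, if the market with private signals gets learning, then the market with public signals also gets learning. Consequently, pairwise informativeness of the signal structure is necessary for the market with private signals to get learning.
   Context: Common setup: the value $\omega$ of an asset lies in a bounded set $\Omega\subset\mathbb{R}$; common full-support prior $\mu_0$; signals in $\mathbb{S}\subseteq\mathbb{R}$ with conditional densities $f(s\mid\omega)$, $0<f(s\mid\omega)<\infty$. At each date $t\ge1$ one agent arrives: independently, with fixed known probability $q\in(0,1)$ a noise agent who buys, sells or does not trade with probability $1/3$ each, otherwise an informative agent who observes $s_t\sim f(\cdot\mid\omega)$, i.i.d. given $\omega$. Private signal case: only actions $H_t=(a_1,\dots,a_{t-1})$ are public; market makers post $ask_t,bid_t$ with zero expected profit on a buy/sell; an informative agent buys if $E[\omega\mid s_t,H_t]>ask_t$, sells if $E[\omega\mid s_t,H_t]<bid_t$, otherwise no trade; the public belief is the posterior of $\mu_0$ given $H_t$. Public signal case: every informative agent's signal is publicly observed and the public belief is the posterior of $\mu_0$ given all observed signals. In either case the market gets learning if for every full-support prior $\mu_0$ the public belief on the true value $\omega^*$ converges to $1$ in probability (equivalently the public expectation converges to $\omega^*$). Pairwise informative: for all $\omega_1\neq\omega_2\in\Omega$ there is a positive-measure set $S\subseteq\mathbb{S}$ with $f(s\mid\omega_1)\neq f(s\mid\omega_2)$ for all $s\in S$. *)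

theory Defs
  imports "HOL-Probability.Probability"
begin

datatype act = Buy | Sell | NoTrade

text \<open>Per-date random outcome: ((is the agent a noise agent?, the noise agent's action), signal).
  All three components are drawn independently; the signal is only used by informative agents.\<close>
type_synonym outcome = "(bool \<times> act) \<times> real"

text \<open>Conditional signal distribution with density f(s|w) (written f s w) w.r.t. Lebesgue measure on S.\<close>
definition sig :: "real set \<Rightarrow> (real \<Rightarrow> real \<Rightarrow> real) \<Rightarrow> real \<Rightarrow> real measure" where
  "sig S f w = density lborel (\<lambda>s. ennreal (f s w * indicator S s))"

definition date_measure :: "real \<Rightarrow> real set \<Rightarrow> (real \<Rightarrow> real \<Rightarrow> real) \<Rightarrow> real \<Rightarrow> outcome measure" where
  "date_measure q S f w =
     measure_pmf (pair_pmf (bernoulli_pmf q) (pmf_of_set {Buy, Sell, NoTrade})) \<Otimes>\<^sub>M sig S f w"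

text \<open>Law of the whole i.i.d. sequence of date outcomes (date t+1 has index t) given true value w.\<close>
definition path_measure :: "real \<Rightarrow> real set \<Rightarrow> (real \<Rightarrow> real \<Rightarrow> real) \<Rightarrow> real \<Rightarrow> (nat \<Rightarrow> outcome) measure" where
  "path_measure q S f w = PiM UNIV (\<lambda>_::nat. date_measure q S f w)"

definition wexp :: "real pmf \<Rightarrow> (real \<Rightarrow> real) \<Rightarrow> real" where
  "wexp mu0 L = (\<integral>w. w * L w \<partial>measure_pmf mu0) / (\<integral>w. L w \<partial>measure_pmf mu0)"

definition wbel :: "real pmf \<Rightarrow> (real \<Rightarrow> real) \<Rightarrow> real \<Rightarrow> real" where
  "wbel mu0 L w = pmf mu0 w * L w / (\<integral>v. L v \<partial>measure_pmf mu0)"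

definition inf_act :: "real pmf \<Rightarrow> (real \<Rightarrow> real \<Rightarrow> real) \<Rightarrow> (real \<Rightarrow> real) \<Rightarrow> real \<Rightarrow> real \<Rightarrow> real \<Rightarrow> act" where
  "inf_act mu0 f L a b s =
     (if wexp mu0 (\<lambda>w. L w * f s w) > a then Buy
      else if wexp mu0 (\<lambda>w. L w * f s w) < b then Sell else NoTrade)"

definition act_prob :: "real \<Rightarrow> real set \<Rightarrow> (real \<Rightarrow> real \<Rightarrow> real) \<Rightarrow> real pmf \<Rightarrow> (real \<Rightarrow> real)
    \<Rightarrow> real \<Rightarrow> real \<Rightarrow> act \<Rightarrow> real \<Rightarrow> real" where
  "act_prob q S f mu0 L a b c w =
     q / 3 + (1 - q) * measure (sig S f w) {s. inf_act mu0 f L a b s = c}"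

text \<open>Likelihood of a public history of actions (lists are newest-first); ask and bid are
  functions of the history.\<close>
primrec priv_lik :: "real \<Rightarrow> real set \<Rightarrow> (real \<Rightarrow> real \<Rightarrow> real) \<Rightarrow> real pmf
    \<Rightarrow> (act list \<Rightarrow> real) \<Rightarrow> (act list \<Rightarrow> real) \<Rightarrow> act list \<Rightarrow> real \<Rightarrow> real" where
  "priv_lik q S f mu0 ask bid [] = (\<lambda>w. 1)"
| "priv_lik q S f mu0 ask bid (c # h) =
     (\<lambda>w. priv_lik q S f mu0 ask bid h w *
          act_prob q S f mu0 (priv_lik q S f mu0 ask bid h) (ask h) (bid h) c w)"

definition zero_profit :: "real \<Rightarrow> real set \<Rightarrow> (real \<Rightarrow> real \<Rightarrow> real) \<Rightarrow> real pmf
    \<Rightarrow> (act list \<Rightarrow> real) \<Rightarrow> (act list \<Rightarrow> real) \<Rightarrow> bool" where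
  "zero_profit q S f mu0 ask bid \<longleftrightarrow>
     (\<forall>h. ask h = wexp mu0 (\<lambda>w. priv_lik q S f mu0 ask bid h w *
                 act_prob q S f mu0 (priv_lik q S f mu0 ask bid h) (ask h) (bid h) Buy w)
        \<and> bid h = wexp mu0 (\<lambda>w. priv_lik q S f mu0 ask bid h w *
                 act_prob q S f mu0 (priv_lik q S f mu0 ask bid h) (ask h) (bid h) Sell w))"

definition priv_action :: "real \<Rightarrow> real set \<Rightarrow> (real \<Rightarrow> real \<Rightarrow> real) \<Rightarrow> real pmf
    \<Rightarrow> (act list \<Rightarrow> real) \<Rightarrow> (act list \<Rightarrow> real) \<Rightarrow> act list \<Rightarrow> outcome \<Rightarrow> act" where
  "priv_action q S f mu0 ask bid h x =
     (if fst (fst x) then snd (fst x)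
      else inf_act mu0 f (priv_lik q S f mu0 ask bid h) (ask h) (bid h) (snd x))"

primrec priv_hist :: "real \<Rightarrow> real set \<Rightarrow> (real \<Rightarrow> real \<Rightarrow> real) \<Rightarrow> real pmf
    \<Rightarrow> (act list \<Rightarrow> real) \<Rightarrow> (act list \<Rightarrow> real) \<Rightarrow> (nat \<Rightarrow> outcome) \<Rightarrow> nat \<Rightarrow> act list" where
  "priv_hist q S f mu0 ask bid xs 0 = []"
| "priv_hist q S f mu0 ask bid xs (Suc t) =
     priv_action q S f mu0 ask bid (priv_hist q S f mu0 ask bid xs t) (xs t)
       # priv_hist q S f mu0 ask bid xs t"

definition priv_belief :: "real \<Rightarrow> real set \<Rightarrow> (real \<Rightarrow> real \<Rightarrow> real) \<Rightarrow> real pmf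
    \<Rightarrow> (act list \<Rightarrow> real) \<Rightarrow> (act list \<Rightarrow> real) \<Rightarrow> (nat \<Rightarrow> outcome) \<Rightarrow> nat \<Rightarrow> real \<Rightarrow> real" where
  "priv_belief q S f mu0 ask bid xs t w =
     wbel mu0 (priv_lik q S f mu0 ask bid (priv_hist q S f mu0 ask bid xs t)) w"

definition pub_lik :: "(real \<Rightarrow> real \<Rightarrow> real) \<Rightarrow> (nat \<Rightarrow> outcome) \<Rightarrow> nat \<Rightarrow> real \<Rightarrow> real" where
  "pub_lik f xs t w = (\<Prod>i<t. if fst (fst (xs i)) then 1 else f (snd (xs i)) w)"

definition pub_belief :: "real pmf \<Rightarrow> (real \<Rightarrow> real \<Rightarrow> real) \<Rightarrow> (nat \<Rightarrow> outcome) \<Rightarrow> nat \<Rightarrow> real \<Rightarrow> real" where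
  "pub_belief mu0 f xs t w = wbel mu0 (pub_lik f xs t) w"

definition learns :: "(real \<Rightarrow> (nat \<Rightarrow> outcome) measure) \<Rightarrow> real set
    \<Rightarrow> ((nat \<Rightarrow> outcome) \<Rightarrow> nat \<Rightarrow> real \<Rightarrow> real) \<Rightarrow> bool" where
  "learns P Om B \<longleftrightarrow>
     (\<forall>w\<in>Om. (\<forall>t. (\<lambda>xs. B xs t w) \<in> borel_measurable (P w)) \<and>
        (\<forall>e>0. (\<lambda>t. measure (P w) {xs \<in> space (P w). \<bar>B xs t w - 1\<bar> > e}) \<longlonglongrightarrow> 0))"

definition private_learning :: "real \<Rightarrow> real set \<Rightarrow> (real \<Rightarrow> real \<Rightarrow> real) \<Rightarrow> real set \<Rightarrow> bool" where
  "private_learning q S f Om \<longleftrightarrow>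
     (\<forall>mu0. set_pmf mu0 = Om \<longrightarrow>
        (\<exists>ask bid. zero_profit q S f mu0 ask bid \<and>
           learns (path_measure q S f) Om (priv_belief q S f mu0 ask bid)))"

definition public_learning :: "real \<Rightarrow> real set \<Rightarrow> (real \<Rightarrow> real \<Rightarrow> real) \<Rightarrow> real set \<Rightarrow> bool" where
  "public_learning q S f Om \<longleftrightarrow>
     (\<forall>mu0. set_pmf mu0 = Om \<longrightarrow> learns (path_measure q S f) Om (pub_belief mu0 f))"

definition pairwise_informative :: "real set \<Rightarrow> (real \<Rightarrow> real \<Rightarrow> real) \<Rightarrow> real set \<Rightarrow> bool" where
  "pairwise_informative S f Om \<longleftrightarrow>
     (\<forall>w1\<in>Om. \<forall>w2\<in>Om. w1 \<noteq> w2 \<longrightarrow>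
        (\<exists>A. A \<subseteq> S \<and> A \<in> sets lborel \<and> emeasure lborel A > 0 \<and> (\<forall>s\<in>A. f s w1 \<noteq> f s w2)))"

end

theory Submission
  imports Defs
begin

lemma sig_prob:
  assumes "S \<in> sets lborel" "(\<lambda>s. f s w) \<in> borel_measurable lborel"
    "(\<integral>\<^sup>+ s. ennreal (f s w * indicator S s) \<partial>lborel) = 1"
  shows "prob_space (sig S f w)"
proof
  have [measurable]: "S \<in> sets borel" using assms(1) by simp
  have [measurable]: "(\<lambda>s. f s w) \<in> borel_measurable borel" using assms(2) by simp
  show "emeasure (sig S f w) (space (sig S f w)) = 1"
    unfolding sig_def using assms(3) by (subst emeasure_density) auto
qed

lemma date_prob:
  assumes "prob_space (sig S f w)"
  shows "prob_space (date_measure q S f w)"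
  unfolding date_measure_def
  by (intro prob_space_pair assms prob_space_measure_pmf)

lemma path_prob:
  assumes "prob_space (sig S f w)"
  shows "prob_space (path_measure q S f w)"
  unfolding path_measure_def
  by (intro prob_space_PiM date_prob assms)

lemma exists_full_pmf:
  assumes "Om \<noteq> {}" "countable Om"
  shows "\<exists>mu0::real pmf. set_pmf mu0 = Om"
proof -
  let ?p = "map_pmf (from_nat_into Om) (geometric_pmf (1/2))"
  have "set_pmf ?p = Om" using assms by (simp add: set_pmf_geometric)
  then show ?thesis by blast
qed

lemma sig_eq_if_not_distinct:
  assumes "S \<in> sets lborel" "(\<lambda>s. f s w1) \<in> borel_measurable lborel" "(\<lambda>s. f s w2) \<in> borel_measurable lborel"
    and nd: "\<not> (\<exists>A. A \<subseteq> S \<and> A \<in> sets lborel \<and> emeasure lborel A > 0 \<and> (\<forall>s\<in>A. f s w1 \<noteq> f s w2))"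
  shows "sig S f w1 = sig S f w2"
proof -
  have [measurable]: "S \<in> sets borel" using assms(1) by simp
  have [measurable]: "(\<lambda>s. f s w1) \<in> borel_measurable borel" "(\<lambda>s. f s w2) \<in> borel_measurable borel"
    using assms(2,3) by simp_all
  let ?A = "{s\<in>S. f s w1 \<noteq> f s w2}"
  have Am: "?A \<in> sets lborel" by simp
  have "\<not> emeasure lborel ?A > 0"
  proof
    assume "emeasure lborel ?A > 0"
    then have "\<exists>A. A \<subseteq> S \<and> A \<in> sets lborel \<and> emeasure lborel A > 0 \<and> (\<forall>s\<in>A. f s w1 \<noteq> f s w2)"
      using Am by (intro exI[of _ ?A]) auto
    with nd show False by blast
  qed
  then have "emeasure lborel ?A = 0" by (simp add: zero_less_iff_neq_zero)
  then have "?A \<in> null_sets lborel" using Am by blast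
  then have ae: "AE s in lborel. s \<notin> ?A" by (rule AE_I') auto
  show ?thesis unfolding sig_def
  proof (rule density_cong)
    show "AE x in lborel. ennreal (f x w1 * indicator S x) = ennreal (f x w2 * indicator S x)"
      using ae by eventually_elim (auto split: split_indicator)
  next
    show "(\<lambda>s. ennreal (f s w1 * indicator S s)) \<in> borel_measurable lborel"
      unfolding measurable_lborel1 by measurable
  next
    show "(\<lambda>s. ennreal (f s w2 * indicator S s)) \<in> borel_measurable lborel"
      unfolding measurable_lborel1 by measurable
  qed
qed


lemma act_prob_bounds:
  assumes "prob_space (sig S f w)" "0 < q" "q < 1"
  shows "q/3 \<le> act_prob q S f mu0 L a b c w" "act_prob q S f mu0 L a b c w \<le> 1"
proof -
  interpret prob_space "sig S f w" by fact
  let ?m = "measure (sig S f w) {s. inf_act mu0 f L a b s = c}"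
  have "0 \<le> ?m" "?m \<le> 1" by auto
  then have "0 \<le> (1-q) * ?m" "(1-q) * ?m \<le> 1 - q" using assms(2,3)
    by (auto intro: mult_left_le)
  then show "q/3 \<le> act_prob q S f mu0 L a b c w" "act_prob q S f mu0 L a b c w \<le> 1"
    unfolding act_prob_def using assms(2) by auto
qed

lemma priv_lik_bounds:
  assumes "prob_space (sig S f w)" "0 < q" "q < 1"
  shows "0 < priv_lik q S f mu0 ask bid h w \<and> priv_lik q S f mu0 ask bid h w \<le> 1"
proof (induction h)
  case Nil
  then show ?case by simp
next
  case (Cons c h)
  let ?L = "priv_lik q S f mu0 ask bid h w"
  let ?A = "act_prob q S f mu0 (priv_lik q S f mu0 ask bid h) (ask h) (bid h) c w"
  have a: "q/3 \<le> ?A" "?A \<le> 1" using act_prob_bounds[OF assms] by auto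
  have "0 < ?L * ?A" using Cons a assms(2) by simp
  moreover have "?L * ?A \<le> 1" using Cons a assms(2) by (simp add: mult_le_one)
  ultimately show ?case by simp
qed

lemma wbel_sum_le:
  fixes mu0 :: "real pmf"
  assumes L: "\<And>v. v \<in> set_pmf mu0 \<Longrightarrow> 0 < L v \<and> L v \<le> 1"
    and w: "w1 \<in> set_pmf mu0" "w2 \<in> set_pmf mu0" "w1 \<noteq> w2"
  shows "wbel mu0 L w1 + wbel mu0 L w2 \<le> 1"
proof -
  let ?g = "\<lambda>x. L w1 * indicator {w1} x + L w2 * indicator {w2} x"
  have intL: "integrable (measure_pmf mu0) L"
    by (rule measure_pmf.integrable_const_bound[where B=1])
       (auto simp: AE_measure_pmf_iff dest!: L)
  have intg: "integrable (measure_pmf mu0) ?g"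
    by (rule measure_pmf.integrable_const_bound[where B="\<bar>L w1\<bar> + \<bar>L w2\<bar>"])
       (auto split: split_indicator)
  have e: "(\<integral>x. ?g x \<partial>mu0) = L w1 * pmf mu0 w1 + L w2 * pmf mu0 w2"
    by (subst Bochner_Integration.integral_add)
       (auto intro!: integrable_mult_right integrable_real_indicator
             simp: measure_pmf_single measure_pmf.emeasure_eq_measure)
  have le: "(\<integral>x. ?g x \<partial>mu0) \<le> (\<integral>x. L x \<partial>mu0)"
    by (rule integral_mono_AE[OF intg intL])
       (use w in \<open>auto simp: AE_measure_pmf_iff split: split_indicator dest!: L\<close>)
  have I: "L w1 * pmf mu0 w1 + L w2 * pmf mu0 w2 \<le> (\<integral>x. L x \<partial>mu0)" using e le by simp
  have p: "0 < pmf mu0 w1" "0 < pmf mu0 w2" using w by (auto simp: pmf_positive)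
  have l: "0 < L w1" "0 < L w2" using L w by auto
  have pos: "0 < L w1 * pmf mu0 w1 + L w2 * pmf mu0 w2" using p l by (simp add: add_pos_pos)
  have "wbel mu0 L w1 + wbel mu0 L w2 = (L w1 * pmf mu0 w1 + L w2 * pmf mu0 w2) / (\<integral>x. L x \<partial>mu0)"
    unfolding wbel_def by (simp add: add_divide_distrib mult.commute)
  also have "\<dots> \<le> 1" using I pos by simp
  finally show ?thesis .
qed

lemma private_imp_pairwise:
  assumes Om: "Om \<noteq> {}" "countable Om"
    and q: "0 < q" "q < 1"
    and S: "S \<in> sets lborel"
    and fm: "\<forall>w\<in>Om. (\<lambda>s. f s w) \<in> borel_measurable lborel"
    and fi: "\<forall>w\<in>Om. (\<integral>\<^sup>+ s. ennreal (f s w * indicator S s) \<partial>lborel) = 1"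
    and pl: "private_learning q S f Om"
  shows "pairwise_informative S f Om"
proof (rule ccontr)
  assume "\<not> pairwise_informative S f Om"
  then obtain w1 w2 where w: "w1 \<in> Om" "w2 \<in> Om" "w1 \<noteq> w2"
    and nd: "\<not> (\<exists>A. A \<subseteq> S \<and> A \<in> sets lborel \<and> emeasure lborel A > 0 \<and> (\<forall>s\<in>A. f s w1 \<noteq> f s w2))"
    unfolding pairwise_informative_def by blast
  have sigeq: "sig S f w1 = sig S f w2"
    by (rule sig_eq_if_not_distinct[OF S _ _ nd]) (use fm w in auto)
  have sigp: "\<And>v. v \<in> Om \<Longrightarrow> prob_space (sig S f v)"
    using sig_prob S fm fi by blast
  have Peq: "path_measure q S f w2 = path_measure q S f w1"
    unfolding path_measure_def date_measure_def sigeq ..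
  obtain mu0 :: "real pmf" where mu0: "set_pmf mu0 = Om" using exists_full_pmf[OF Om] by blast
  with pl obtain ask bid where lr: "learns (path_measure q S f) Om (priv_belief q S f mu0 ask bid)"
    unfolding private_learning_def by blast
  define P where "P = path_measure q S f w1"
  define B where "B = priv_belief q S f mu0 ask bid"
  interpret P: prob_space P unfolding P_def by (rule path_prob[OF sigp[OF w(1)]])
  have m1: "\<And>t. (\<lambda>xs. B xs t w1) \<in> borel_measurable P"
    and m2: "\<And>t. (\<lambda>xs. B xs t w2) \<in> borel_measurable P"
    and l1: "(\<lambda>t. measure P {xs \<in> space P. \<bar>B xs t w1 - 1\<bar> > 1/3}) \<longlonglongrightarrow> 0"
    and l2: "(\<lambda>t. measure P {xs \<in> space P. \<bar>B xs t w2 - 1\<bar> > 1/3}) \<longlonglongrightarrow> 0"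
  proof -
    have all: "\<forall>w\<in>Om. (\<forall>t. (\<lambda>xs. B xs t w) \<in> borel_measurable (path_measure q S f w)) \<and>
        (\<forall>e>0. (\<lambda>t. measure (path_measure q S f w) {xs \<in> space (path_measure q S f w). \<bar>B xs t w - 1\<bar> > e}) \<longlonglongrightarrow> 0)"
      using lr unfolding learns_def B_def by blast
    have h1: "(\<forall>t. (\<lambda>xs. B xs t w1) \<in> borel_measurable P) \<and>
        (\<forall>e>0. (\<lambda>t. measure P {xs \<in> space P. \<bar>B xs t w1 - 1\<bar> > e}) \<longlonglongrightarrow> 0)"
      using bspec[OF all w(1)] unfolding P_def .
    have h2: "(\<forall>t. (\<lambda>xs. B xs t w2) \<in> borel_measurable P) \<and>
        (\<forall>e>0. (\<lambda>t. measure P {xs \<in> space P. \<bar>B xs t w2 - 1\<bar> > e}) \<longlonglongrightarrow> 0)"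
      using bspec[OF all w(2)] unfolding P_def Peq .
    show "\<And>t. (\<lambda>xs. B xs t w1) \<in> borel_measurable P" "\<And>t. (\<lambda>xs. B xs t w2) \<in> borel_measurable P"
      using h1 h2 by auto
    show "(\<lambda>t. measure P {xs \<in> space P. \<bar>B xs t w1 - 1\<bar> > 1/3}) \<longlonglongrightarrow> 0"
      using h1[THEN conjunct2, rule_format, of "1/3"] by simp
    show "(\<lambda>t. measure P {xs \<in> space P. \<bar>B xs t w2 - 1\<bar> > 1/3}) \<longlonglongrightarrow> 0"
      using h2[THEN conjunct2, rule_format, of "1/3"] by simp
  qed
  note m1[measurable] m2[measurable]
  let ?A1 = "\<lambda>t. {xs \<in> space P. \<bar>B xs t w1 - 1\<bar> > 1/3}"
  let ?A2 = "\<lambda>t. {xs \<in> space P. \<bar>B xs t w2 - 1\<bar> > 1/3}"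
  have ge: "1 \<le> measure P (?A1 t) + measure P (?A2 t)" for t
  proof -
    have s1: "?A1 t \<in> sets P" by measurable
    have s2: "?A2 t \<in> sets P" by measurable
    have sub: "space P \<subseteq> ?A1 t \<union> ?A2 t"
    proof
      fix xs assume xs: "xs \<in> space P"
      let ?L = "priv_lik q S f mu0 ask bid (priv_hist q S f mu0 ask bid xs t)"
      have "wbel mu0 ?L w1 + wbel mu0 ?L w2 \<le> 1"
        by (rule wbel_sum_le) (use priv_lik_bounds[OF sigp q] mu0 w in auto)
      then have "B xs t w1 + B xs t w2 \<le> 1" unfolding B_def priv_belief_def .
      then have "1/3 < \<bar>B xs t w1 - 1\<bar> \<or> 1/3 < \<bar>B xs t w2 - 1\<bar>" by (auto simp: abs_if)
      then show "xs \<in> ?A1 t \<union> ?A2 t" using xs by blast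
    qed
    have "1 = measure P (space P)" using P.prob_space by simp
    also have "\<dots> \<le> measure P (?A1 t \<union> ?A2 t)"
      using sub s1 s2 by (intro P.finite_measure_mono) auto
    also have "\<dots> \<le> measure P (?A1 t) + measure P (?A2 t)"
      using s1 s2 by (intro measure_subadditive) auto
    finally show ?thesis .
  qed
  have "(\<lambda>t. measure P (?A1 t) + measure P (?A2 t)) \<longlonglongrightarrow> 0 + 0"
    by (intro tendsto_add l1 l2)
  then have "1 \<le> (0::real) + 0"
    by (rule LIMSEQ_le_const) (use ge in auto)
  then show False by simp
qed



lemma PiM_prod_nn:
  assumes D: "prob_space D" and phi: "phi \<in> borel_measurable D"
  shows "(\<integral>\<^sup>+ xs. (\<Prod>i<t. phi (xs i)) \<partial>PiM UNIV (\<lambda>_. D)) = (\<integral>\<^sup>+ x. phi x \<partial>D) ^ t"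
proof -
  interpret product_prob_space "\<lambda>_. D" UNIV by (rule product_prob_spaceI) (rule D)
  have m: "(\<lambda>xs. \<Prod>i<t. phi (xs i)) \<in> borel_measurable (PiM {..<t} (\<lambda>_. D))"
    using phi by measurable
  have "(\<integral>\<^sup>+ xs. (\<Prod>i<t. phi (xs i)) \<partial>PiM UNIV (\<lambda>_. D))
      = (\<integral>\<^sup>+ xs. (\<Prod>i<t. phi (restrict xs {..<t} i)) \<partial>PiM UNIV (\<lambda>_. D))"
    by (intro nn_integral_cong prod.cong) auto
  also have "\<dots> = (\<integral>\<^sup>+ xs. (\<Prod>i<t. phi (xs i)) \<partial>distr (PiM UNIV (\<lambda>_. D)) (PiM {..<t} (\<lambda>_. D)) (\<lambda>x. restrict x {..<t}))"
    by (subst nn_integral_distr) (auto intro!: measurable_restrict_subset simp: distr_PiM_restrict_finite m)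
  also have "\<dots> = (\<integral>\<^sup>+ xs. (\<Prod>i<t. phi (xs i)) \<partial>PiM {..<t} (\<lambda>_. D))"
    by (subst distr_PiM_restrict_finite) auto
  also have "\<dots> = (\<Prod>i<t. \<integral>\<^sup>+ x. phi x \<partial>D)"
    by (rule product_nn_integral_prod) (auto simp: phi)
  also have "\<dots> = (\<integral>\<^sup>+ x. phi x \<partial>D) ^ t" by simp
  finally show ?thesis .
qed

locale pubsetup =
  fixes q :: real and S :: "real set" and f :: "real \<Rightarrow> real \<Rightarrow> real" and Om :: "real set"
    and mu0 :: "real pmf" and u :: real
  assumes Omc: "countable Om"
    and q: "0 < q" "q < 1"
    and S: "S \<in> sets lborel"
    and fm: "\<forall>w\<in>Om. (\<lambda>s. f s w) \<in> borel_measurable lborel"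
    and fpos: "\<forall>w\<in>Om. \<forall>s\<in>S. 0 < f s w"
    and fi: "\<forall>w\<in>Om. (\<integral>\<^sup>+ s. ennreal (f s w * indicator S s) \<partial>lborel) = 1"
    and mu0: "set_pmf mu0 = Om"
    and u: "u \<in> Om"
    and pw: "pairwise_informative S f Om"
begin

abbreviation "D \<equiv> date_measure q S f u"
abbreviation "P \<equiv> path_measure q S f u"
abbreviation "Sg \<equiv> sig S f u"

lemma S_borel[measurable]: "S \<in> sets borel" using S by simp

lemma f_meas[measurable]: "v \<in> Om \<Longrightarrow> (\<lambda>s. f s v) \<in> borel_measurable borel"
  using fm by simp

lemma sig_ps: "v \<in> Om \<Longrightarrow> prob_space (sig S f v)"
  using sig_prob S fm fi by blast

lemma D_ps: "prob_space D" by (rule date_prob[OF sig_ps[OF u]])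

lemma P_ps: "prob_space P" by (rule path_prob[OF sig_ps[OF u]])

lemma sets_D: "sets D = sets (count_space UNIV \<Otimes>\<^sub>M borel)"
  unfolding date_measure_def sig_def
  by (intro sets_pair_measure_cong) auto

lemma D_int:
  assumes k[measurable]: "k \<in> borel_measurable borel"
  shows "(\<integral>\<^sup>+ x. (if fst (fst x) then 1 else k (snd x)) \<partial>D)
      = ennreal q + ennreal (1-q) * (\<integral>\<^sup>+ s. ennreal (f s u * indicator S s) * k s \<partial>lborel)"
proof -
  interpret Sg: prob_space Sg by (rule sig_ps[OF u])
  let ?pm = "measure_pmf (pair_pmf (bernoulli_pmf q) (pmf_of_set {Buy, Sell, NoTrade}))"
  have ms: "sets Sg = sets borel" unfolding sig_def by simp
  have meas: "(\<lambda>x. if fst (fst x) then 1 else k (snd x)) \<in> borel_measurable (?pm \<Otimes>\<^sub>M Sg)"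
  proof -
    have [measurable]: "(\<lambda>x. fst (fst x)) \<in> measurable (?pm \<Otimes>\<^sub>M borel) (count_space UNIV)"
      by (rule measurable_compose[OF measurable_fst]) simp
    show ?thesis
      by (subst measurable_cong_sets[OF sets_pair_measure_cong[OF refl ms] refl]) measurable
  qed
  have "(\<integral>\<^sup>+ x. (if fst (fst x) then 1 else k (snd x)) \<partial>D)
      = (\<integral>\<^sup>+ a. \<integral>\<^sup>+ s. (if fst a then 1 else k s) \<partial>Sg \<partial>?pm)"
    unfolding date_measure_def Sg.nn_integral_fst[OF meas, symmetric] 
    by (intro nn_integral_cong) simp
  also have "\<dots> = (\<integral>\<^sup>+ a. (if fst a then 1 else \<integral>\<^sup>+ s. k s \<partial>Sg) \<partial>?pm)"
    by (intro nn_integral_cong) (auto simp: Sg.emeasure_space_1)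
  also have "\<dots> = (\<integral>\<^sup>+ b. (if b then 1 else \<integral>\<^sup>+ s. k s \<partial>Sg) \<partial>bernoulli_pmf q)"
    by (subst nn_integral_pair_pmf') (simp add: measure_pmf.emeasure_space_1)
  also have "\<dots> = ennreal q + ennreal (1-q) * (\<integral>\<^sup>+ s. k s \<partial>Sg)"
    using q by (simp add: mult.commute)
  also have "(\<integral>\<^sup>+ s. k s \<partial>Sg) = (\<integral>\<^sup>+ s. ennreal (f s u * indicator S s) * k s \<partial>lborel)"
    unfolding sig_def using u by (subst nn_integral_density) auto
  finally show ?thesis .
qed

definition hs :: "real \<Rightarrow> outcome \<Rightarrow> ennreal" where
  "hs v x = (if fst (fst x) then 1 else ennreal (sqrt (f (snd x) v / f (snd x) u)))"

definition rho :: "real \<Rightarrow> ennreal" where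
  "rho v = (\<integral>\<^sup>+ s. ennreal (sqrt (f s v * f s u) * indicator S s) \<partial>lborel)"

lemma fstfst_meas[measurable]:
  "(\<lambda>x::outcome. fst (fst x)) \<in> measurable (count_space UNIV \<Otimes>\<^sub>M borel) (count_space UNIV)"
  by (rule measurable_compose[OF measurable_fst]) simp

lemma hs_meas[measurable]: "v \<in> Om \<Longrightarrow> hs v \<in> borel_measurable D"
  unfolding hs_def using u
  by (subst measurable_cong_sets[OF sets_D refl]) measurable

lemma hs2_int: assumes v: "v \<in> Om" shows "(\<integral>\<^sup>+ x. (hs v x)^2 \<partial>D) = 1"
proof -
  have "(\<integral>\<^sup>+ x. (hs v x)^2 \<partial>D) = (\<integral>\<^sup>+ x. (if fst (fst x) then 1 else (\<lambda>s. ennreal (sqrt (f s v / f s u))^2) (snd x)) \<partial>D)"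
    by (intro nn_integral_cong) (simp add: hs_def)
  also have "\<dots> = ennreal q + ennreal (1-q) * (\<integral>\<^sup>+ s. ennreal (f s u * indicator S s) * ennreal (sqrt (f s v / f s u))^2 \<partial>lborel)"
    using v u by (intro D_int) measurable
  also have "(\<integral>\<^sup>+ s. ennreal (f s u * indicator S s) * ennreal (sqrt (f s v / f s u))^2 \<partial>lborel)
       = (\<integral>\<^sup>+ s. ennreal (f s v * indicator S s) \<partial>lborel)"
  proof (intro nn_integral_cong)
    fix s
    show "ennreal (f s u * indicator S s) * ennreal (sqrt (f s v / f s u))^2 = ennreal (f s v * indicator S s)"
    proof (cases "s \<in> S")
      case True
      have a: "0 < f s u" "0 < f s v" using fpos u v True by auto
      have "ennreal (sqrt (f s v / f s u))^2 = ennreal ((sqrt (f s v / f s u))^2)"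
        by (rule ennreal_power) (use a in simp)
      also have "\<dots> = ennreal (f s v / f s u)" using a by simp
      finally show ?thesis using a True by (simp add: ennreal_mult[symmetric])
    qed simp
  qed
  also have "\<dots> = 1" using fi v by auto
  finally show ?thesis using q by (simp add: ennreal_plus[symmetric] del: ennreal_plus)
qed

lemma hs_int: assumes v: "v \<in> Om" shows "(\<integral>\<^sup>+ x. hs v x \<partial>D) = ennreal q + ennreal (1-q) * rho v"
proof -
  have "(\<integral>\<^sup>+ x. hs v x \<partial>D) = (\<integral>\<^sup>+ x. (if fst (fst x) then 1 else (\<lambda>s. ennreal (sqrt (f s v / f s u))) (snd x)) \<partial>D)"
    by (intro nn_integral_cong) (simp add: hs_def)
  also have "\<dots> = ennreal q + ennreal (1-q) * (\<integral>\<^sup>+ s. ennreal (f s u * indicator S s) * ennreal (sqrt (f s v / f s u)) \<partial>lborel)"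
    using v u by (intro D_int) measurable
  also have "(\<integral>\<^sup>+ s. ennreal (f s u * indicator S s) * ennreal (sqrt (f s v / f s u)) \<partial>lborel) = rho v"
    unfolding rho_def
  proof (intro nn_integral_cong)
    fix s
    show "ennreal (f s u * indicator S s) * ennreal (sqrt (f s v / f s u)) = ennreal (sqrt (f s v * f s u) * indicator S s)"
    proof (cases "s \<in> S")
      case True
      have a: "0 < f s u" "0 < f s v" using fpos u v True by auto
      have "f s u * sqrt (f s v / f s u) = sqrt ((f s u)^2) * sqrt (f s v / f s u)" using a by simp
      also have "\<dots> = sqrt ((f s u)^2 * (f s v / f s u))" by (simp only: real_sqrt_mult)
      also have "(f s u)^2 * (f s v / f s u) = f s v * f s u" using a by (simp add: power2_eq_square field_simps)
      finally show ?thesis using a True by (simp add: ennreal_mult[symmetric])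
    qed simp
  qed
  finally show ?thesis .
qed

lemma rho_lt: assumes v: "v \<in> Om" "v \<noteq> u" shows "rho v < 1"
proof -
  obtain A where A: "A \<subseteq> S" "A \<in> sets lborel" "emeasure lborel A > 0" "\<forall>s\<in>A. f s v \<noteq> f s u"
    using pw v u unfolding pairwise_informative_def by blast
  let ?g = "\<lambda>s. ennreal ((f s v + f s u) / 2 * indicator S s)"
  let ?h = "\<lambda>s. ennreal (sqrt (f s v * f s u) * indicator S s)"
  have [measurable]: "(\<lambda>s. f s v) \<in> borel_measurable borel" "(\<lambda>s. f s u) \<in> borel_measurable borel"
    using v u by auto
  have hm: "?h \<in> borel_measurable lborel" by simp
  have gm: "?g \<in> borel_measurable lborel" by simp
  have gi: "(\<integral>\<^sup>+ s. ?g s \<partial>lborel) = 1"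
  proof -
    have "(\<integral>\<^sup>+ s. ?g s \<partial>lborel) = (\<integral>\<^sup>+ s. (ennreal (f s v * indicator S s) + ennreal (f s u * indicator S s)) / 2 \<partial>lborel)"
    proof (intro nn_integral_cong)
      fix s show "?g s = (ennreal (f s v * indicator S s) + ennreal (f s u * indicator S s)) / 2"
      proof (cases "s \<in> S")
        case True
        have a: "0 < f s u" "0 < f s v" using fpos u v True by auto
        have "ennreal ((f s v + f s u) / 2) = ennreal (f s v + f s u) / ennreal 2"
          using a by (intro divide_ennreal[symmetric]) auto
        then show ?thesis using True a
          by (simp add: ennreal_plus[symmetric] del: ennreal_plus)
      qed simp
    qed
    also have "\<dots> = ((\<integral>\<^sup>+ s. ennreal (f s v * indicator S s) \<partial>lborel) + (\<integral>\<^sup>+ s. ennreal (f s u * indicator S s) \<partial>lborel)) / 2"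
      by (simp add: divide_ennreal_def nn_integral_multc nn_integral_add)
    also have "\<dots> = 1" using fi u v by (simp add: one_add_one[symmetric] del: one_add_one)
    finally show ?thesis .
  qed
  have le: "AE s in lborel. ?h s \<le> ?g s"
  proof (intro AE_I2)
    fix s show "?h s \<le> ?g s"
    proof (cases "s \<in> S")
      case True
      have a: "0 < f s u" "0 < f s v" using fpos u v True by auto
      then show ?thesis using True arith_geo_mean_sqrt[of "f s v" "f s u"] by (simp add: ennreal_leI)
    qed simp
  qed
  have nle: "\<not> (AE s in lborel. ?g s \<le> ?h s)"
  proof
    assume "AE s in lborel. ?g s \<le> ?h s"
    then have "AE s in lborel. s \<notin> A"
    proof eventually_elim
      case (elim s)
      show "s \<notin> A"
      proof
        assume sA: "s \<in> A"
        then have sS: "s \<in> S" using A by auto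
        have a: "0 < f s u" "0 < f s v" using fpos u v sS by auto
        have ne: "f s v \<noteq> f s u" using A sA by auto
        have "sqrt (f s v * f s u) < (f s v + f s u) / 2"
        proof -
          have "0 < (sqrt (f s v) - sqrt (f s u))^2" using ne a by simp
          then have "2 * (sqrt (f s v) * sqrt (f s u)) < (sqrt (f s v))^2 + (sqrt (f s u))^2"
            by (simp add: power2_diff)
          then show ?thesis using a by (simp add: real_sqrt_mult)
        qed
        then have "?h s < ?g s" using sS a by (simp add: ennreal_lessI)
        with elim show False by simp
      qed
    qed
    then have "A \<in> null_sets lborel" using A(2) by (simp add: AE_iff_null_sets)
    then show False using A(3) by (simp add: null_sets_def)
  qed
  have "rho v < (\<integral>\<^sup>+ s. ?g s \<partial>lborel)"
    unfolding rho_def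
  proof (rule nn_integral_less[OF hm gm _ le nle])
    have "(\<integral>\<^sup>+ s. ?h s \<partial>lborel) \<le> (\<integral>\<^sup>+ s. ?g s \<partial>lborel)" by (rule nn_integral_mono_AE[OF le])
    then show "(\<integral>\<^sup>+ s. ?h s \<partial>lborel) \<noteq> \<infinity>" using gi by (auto simp: top_unique)
  qed
  then show ?thesis using gi by simp
qed

definition Lam :: "real \<Rightarrow> nat \<Rightarrow> (nat \<Rightarrow> outcome) \<Rightarrow> ennreal" where
  "Lam v t xs = (\<Prod>i<t. hs v (xs i))"

abbreviation "R \<equiv> restrict_space (measure_pmf mu0) mu0"

lemma R_ps: "prob_space R"
  by (intro prob_space_restrict_space measure_pmf.emeasure_eq_1_AE) (auto simp: AE_measure_pmf_iff)

lemma nn_R: "(\<integral>\<^sup>+ v. G v \<partial>mu0) = (\<integral>\<^sup>+ v. G v \<partial>R)"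
  by (subst nn_integral_restrict_space)
     (auto intro!: nn_integral_cong_AE simp: AE_measure_pmf_iff)

lemma P_def': "P = PiM UNIV (\<lambda>_. D)" unfolding path_measure_def ..

lemma Lam_meas[measurable]: "v \<in> Om \<Longrightarrow> Lam v t \<in> borel_measurable P"
  unfolding Lam_def P_def' by measurable

lemma Lam_pair_meas:
  assumes [measurable]: "\<And>v. v \<in> Om \<Longrightarrow> (\<lambda>x. G v (Lam v t x)) \<in> borel_measurable P"
  shows "(\<lambda>(x, v). G v (Lam v t x)) \<in> borel_measurable (P \<Otimes>\<^sub>M R)"
  by (rule measurable_pair_restrict_pmf2) (auto simp: mu0 Omc)

lemma E_Lam: "v \<in> Om \<Longrightarrow> (\<integral>\<^sup>+ xs. Lam v t xs \<partial>P) = (\<integral>\<^sup>+ x. hs v x \<partial>D) ^ t"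
  unfolding Lam_def P_def' by (rule PiM_prod_nn[OF D_ps hs_meas])

lemma E_Lam2: "v \<in> Om \<Longrightarrow> (\<integral>\<^sup>+ xs. (Lam v t xs)^2 \<partial>P) = 1"
proof -
  assume v: "v \<in> Om"
  have "(\<integral>\<^sup>+ xs. (Lam v t xs)^2 \<partial>P) = (\<integral>\<^sup>+ xs. (\<Prod>i<t. (hs v (xs i))^2) \<partial>P)"
    unfolding Lam_def by (simp add: prod_power_distrib)
  also have "\<dots> = (\<integral>\<^sup>+ x. (hs v x)^2 \<partial>D) ^ t"
    unfolding P_def' by (rule PiM_prod_nn[OF D_ps]) (use v in measurable)
  also have "\<dots> = 1" using hs2_int[OF v] by simp
  finally show ?thesis .
qed

lemma min_sq_le: "min (ennreal c) (x^2) \<le> ennreal (sqrt c) * x" if "0 \<le> c" for x :: ennreal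
proof (cases "x \<le> ennreal (sqrt c)")
  case True
  then have "x^2 \<le> ennreal (sqrt c) * x" by (simp add: power2_eq_square mult_right_mono)
  then show ?thesis by (simp add: min.coboundedI2)
next
  case False
  then have "ennreal (sqrt c) \<le> x" by simp
  then have "ennreal (sqrt c) * ennreal (sqrt c) \<le> ennreal (sqrt c) * x" by (simp add: mult_left_mono)
  moreover have "ennreal (sqrt c) * ennreal (sqrt c) = ennreal c"
    using that by (simp add: ennreal_mult[symmetric])
  ultimately show ?thesis by (simp add: min.coboundedI1)
qed

definition cc :: "real \<Rightarrow> real" where "cc v = 1 / pmf mu0 v"

lemma E_min: assumes v: "v \<in> Om"
  shows "(\<integral>\<^sup>+ xs. min (ennreal (cc v)) ((Lam v t xs)^2) \<partial>P)
     \<le> min 1 (ennreal (sqrt (cc v)) * (\<integral>\<^sup>+ x. hs v x \<partial>D) ^ t)"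
proof -
  have c: "0 \<le> cc v" unfolding cc_def by simp
  have "(\<integral>\<^sup>+ xs. min (ennreal (cc v)) ((Lam v t xs)^2) \<partial>P) \<le> (\<integral>\<^sup>+ xs. (Lam v t xs)^2 \<partial>P)"
    by (intro nn_integral_mono) simp
  also have "\<dots> = 1" by (rule E_Lam2[OF v])
  finally have 1: "(\<integral>\<^sup>+ xs. min (ennreal (cc v)) ((Lam v t xs)^2) \<partial>P) \<le> 1" .
  have "(\<integral>\<^sup>+ xs. min (ennreal (cc v)) ((Lam v t xs)^2) \<partial>P) \<le> (\<integral>\<^sup>+ xs. ennreal (sqrt (cc v)) * Lam v t xs \<partial>P)"
    by (intro nn_integral_mono min_sq_le c)
  also have "\<dots> = ennreal (sqrt (cc v)) * (\<integral>\<^sup>+ x. hs v x \<partial>D) ^ t"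
    using v by (subst nn_integral_cmult) (auto simp: E_Lam)
  finally show ?thesis using 1 by simp
qed

definition Z :: "nat \<Rightarrow> (nat \<Rightarrow> outcome) \<Rightarrow> ennreal" where
  "Z t xs = (\<integral>\<^sup>+ v. indicator (-{u}) v * min (ennreal (cc v)) ((Lam v t xs)^2) \<partial>mu0)"

definition T :: "nat \<Rightarrow> ennreal" where
  "T t = (\<integral>\<^sup>+ v. indicator (-{u}) v * min 1 (ennreal (sqrt (cc v)) * (\<integral>\<^sup>+ x. hs v x \<partial>D) ^ t) \<partial>mu0)"

lemma Z_pair_meas: "(\<lambda>(xs, v). indicator (-{u}) v * min (ennreal (cc v)) ((Lam v t xs)^2)) \<in> borel_measurable (P \<Otimes>\<^sub>M R)"
  by (rule Lam_pair_meas[where G="\<lambda>v y. indicator (-{u}) v * min (ennreal (cc v)) (y^2)", simplified])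
     measurable

lemma Z_meas[measurable]: "Z t \<in> borel_measurable P"
proof -
  interpret R: prob_space R by (rule R_ps)
  have "(\<lambda>xs. \<integral>\<^sup>+ v. indicator (-{u}) v * min (ennreal (cc v)) ((Lam v t xs)^2) \<partial>R) \<in> borel_measurable P"
    by (rule R.borel_measurable_nn_integral) (use Z_pair_meas in \<open>simp add: split_beta'\<close>)
  then show ?thesis unfolding Z_def nn_R[symmetric] by simp
qed

lemma EZ: "(\<integral>\<^sup>+ xs. Z t xs \<partial>P) \<le> T t"
proof -
  interpret R: prob_space R by (rule R_ps)
  interpret Pp: prob_space P by (rule P_ps)
  interpret PR: pair_sigma_finite P R by unfold_locales
  let ?F = "\<lambda>(xs, v). indicator (-{u}) v * min (ennreal (cc v)) ((Lam v t xs)^2)"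
  have "(\<integral>\<^sup>+ xs. Z t xs \<partial>P) = (\<integral>\<^sup>+ xs. \<integral>\<^sup>+ v. ?F (xs, v) \<partial>R \<partial>P)"
    unfolding Z_def nn_R by simp
  also have "\<dots> = (\<integral>\<^sup>+ v. \<integral>\<^sup>+ xs. ?F (xs, v) \<partial>P \<partial>R)"
    by (rule PR.Fubini[symmetric, OF Z_pair_meas])
  also have "\<dots> = (\<integral>\<^sup>+ v. \<integral>\<^sup>+ xs. ?F (xs, v) \<partial>P \<partial>mu0)"
    by (rule nn_R[symmetric])
  also have "\<dots> \<le> T t"
    unfolding T_def
  proof (intro nn_integral_mono_AE, unfold AE_measure_pmf_iff, intro ballI)
    fix v assume "v \<in> set_pmf mu0"
    then have v: "v \<in> Om" using mu0 by simp
    have "(\<integral>\<^sup>+ xs. ?F (xs, v) \<partial>P) = indicator (-{u}) v * (\<integral>\<^sup>+ xs. min (ennreal (cc v)) ((Lam v t xs)^2) \<partial>P)"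
      using v by (simp add: nn_integral_cmult)
    also have "\<dots> \<le> indicator (-{u}) v * min 1 (ennreal (sqrt (cc v)) * (\<integral>\<^sup>+ x. hs v x \<partial>D) ^ t)"
      by (intro mult_left_mono E_min v) simp
    finally show "(\<integral>\<^sup>+ xs. ?F (xs, v) \<partial>P) \<le> indicator (-{u}) v * min 1 (ennreal (sqrt (cc v)) * (\<integral>\<^sup>+ x. hs v x \<partial>D) ^ t)" .
  qed
  finally show ?thesis .
qed

lemma T_lim: "T \<longlonglongrightarrow> 0"
proof -
  have "(\<lambda>t. T t) \<longlonglongrightarrow> (\<integral>\<^sup>+ v. 0 \<partial>mu0)"
    unfolding T_def
  proof (rule nn_integral_dominated_convergence[where w="\<lambda>_. 1"])
    show "\<And>j. AE v in mu0. indicator (-{u}) v * min 1 (ennreal (sqrt (cc v)) * (\<integral>\<^sup>+ x. hs v x \<partial>D) ^ j) \<le> 1"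
      by (auto split: split_indicator)
    show "(\<integral>\<^sup>+ v. 1 \<partial>mu0) < \<infinity>" by simp
    show "AE v in mu0. (\<lambda>t. indicator (-{u}) v * min 1 (ennreal (sqrt (cc v)) * (\<integral>\<^sup>+ x. hs v x \<partial>D) ^ t)) \<longlonglongrightarrow> 0"
      unfolding AE_measure_pmf_iff
    proof (intro ballI)
      fix v assume "v \<in> set_pmf mu0"
      then have v: "v \<in> Om" using mu0 by simp
      show "(\<lambda>t. indicator (-{u}) v * min 1 (ennreal (sqrt (cc v)) * (\<integral>\<^sup>+ x. hs v x \<partial>D) ^ t)) \<longlonglongrightarrow> 0"
      proof (cases "v = u")
        case True then show ?thesis by simp
      next
        case False
        have rl: "rho v < 1" by (rule rho_lt[OF v False])
        define r where "r = q + (1-q) * enn2real (rho v)"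
        have nt: "rho v \<noteq> \<top>"
        proof
          assume "rho v = \<top>" with rl show False by simp
        qed
        have rho_eq: "rho v = ennreal (enn2real (rho v))" using nt by (simp add: ennreal_enn2real_if)
        have r0: "0 \<le> r" unfolding r_def using q by simp
        have "ennreal (enn2real (rho v)) < ennreal 1" using rl rho_eq by simp
        then have x1: "enn2real (rho v) < 1" by (subst (asm) ennreal_less_iff) auto
        have "(1-q) * enn2real (rho v) < (1-q) * 1"
          by (rule mult_strict_left_mono[OF x1]) (use q in simp)
        then have r1: "r < 1" unfolding r_def by simp
        have hsr: "(\<integral>\<^sup>+ x. hs v x \<partial>D) = ennreal r"
          unfolding hs_int[OF v] r_def using q
          by (subst rho_eq) (simp add: ennreal_mult[symmetric] ennreal_plus[symmetric] del: ennreal_plus)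
        have "(\<lambda>t. r ^ t) \<longlonglongrightarrow> 0" using r0 r1 by (rule LIMSEQ_realpow_zero)
        then have "(\<lambda>t. ennreal (r ^ t)) \<longlonglongrightarrow> ennreal 0" by (rule tendsto_ennrealI)
        then have "(\<lambda>t. ennreal r ^ t) \<longlonglongrightarrow> 0" using r0 by (simp add: ennreal_power)
        then have "(\<lambda>t. ennreal (sqrt (cc v)) * ennreal r ^ t) \<longlonglongrightarrow> ennreal (sqrt (cc v)) * 0"
          by (intro ennreal_tendsto_cmult) auto
        then have "(\<lambda>t. min 1 (ennreal (sqrt (cc v)) * ennreal r ^ t)) \<longlonglongrightarrow> min 1 0"
          by (intro tendsto_min tendsto_const) simp
        then show ?thesis using False by (simp add: hsr)
      qed
    qed
  qed auto
  then show ?thesis by simp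
qed

lemma AE_G: "AE xs in P. \<forall>i. snd (xs i) \<in> S"
proof -
  interpret Sg: prob_space Sg by (rule sig_ps[OF u])
  let ?pm = "measure_pmf (pair_pmf (bernoulli_pmf q) (pmf_of_set {Buy, Sell, NoTrade}))"
  interpret PS: pair_sigma_finite ?pm Sg by unfold_locales
  have ms: "sets Sg = sets borel" unfolding sig_def by simp
  have aeS: "AE y in Sg. y \<in> S"
    unfolding sig_def using u
    by (subst AE_density) (auto split: split_indicator)
  have "AE x in ?pm \<Otimes>\<^sub>M Sg. snd x \<in> S"
  proof (rule PS.AE_pair_measure)
    have "{x \<in> space (?pm \<Otimes>\<^sub>M borel). snd x \<in> S} \<in> sets (?pm \<Otimes>\<^sub>M borel)"
      by measurable
    moreover have "space (?pm \<Otimes>\<^sub>M Sg) = space (?pm \<Otimes>\<^sub>M borel)"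
      by (simp add: space_pair_measure sig_def)
    ultimately have "{x \<in> space (?pm \<Otimes>\<^sub>M Sg). snd x \<in> S} \<in> sets (?pm \<Otimes>\<^sub>M borel)" by simp
    then show "{x \<in> space (?pm \<Otimes>\<^sub>M Sg). snd x \<in> S} \<in> sets (?pm \<Otimes>\<^sub>M Sg)"
      using sets_pair_measure_cong[OF refl ms, of ?pm] by simp
    show "AE x in ?pm. AE y in Sg. snd (x, y) \<in> S" using aeS by simp
  qed
  then have aeD: "AE x in D. snd x \<in> S" unfolding date_measure_def .
  have "\<And>i. AE xs in P. snd (xs i) \<in> S"
    unfolding P_def' by (rule AE_PiM_component[OF D_ps _ aeD]) auto
  then show ?thesis by (simp add: AE_all_countable)
qed

lemma L_pos: assumes G: "\<forall>i. snd (xs i) \<in> S" and v: "v \<in> Om" shows "0 < pub_lik f xs t v"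
  unfolding pub_lik_def using G v fpos by (intro prod_pos) auto

lemma L_eq: assumes G: "\<forall>i. snd (xs i) \<in> S" and v: "v \<in> Om"
  shows "ennreal (pub_lik f xs t v) = ennreal (pub_lik f xs t u) * (Lam v t xs)^2"
proof -
  have e: "ennreal (if fst (fst (xs i)) then 1 else f (snd (xs i)) v)
     = ennreal (if fst (fst (xs i)) then 1 else f (snd (xs i)) u) * (hs v (xs i))^2" for i
  proof (cases "fst (fst (xs i))")
    case False
    have a: "0 < f (snd (xs i)) u" "0 < f (snd (xs i)) v" using G fpos u v by auto
    have "(ennreal (sqrt (f (snd (xs i)) v / f (snd (xs i)) u)))^2 = ennreal ((sqrt (f (snd (xs i)) v / f (snd (xs i)) u))^2)"
      by (rule ennreal_power) (use a in simp)
    also have "\<dots> = ennreal (f (snd (xs i)) v / f (snd (xs i)) u)" using a by simp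
    finally show ?thesis using False a by (simp add: hs_def ennreal_mult[symmetric])
  qed (simp add: hs_def)
  have nn: "\<And>w i. w \<in> Om \<Longrightarrow> 0 \<le> (if fst (fst (xs i)) then 1 else f (snd (xs i)) w)"
    using G fpos by (auto intro: less_imp_le)
  have "ennreal (pub_lik f xs t v) = (\<Prod>i<t. ennreal (if fst (fst (xs i)) then 1 else f (snd (xs i)) v))"
    unfolding pub_lik_def by (rule prod_ennreal[symmetric]) (use nn v in auto)
  also have "\<dots> = (\<Prod>i<t. ennreal (if fst (fst (xs i)) then 1 else f (snd (xs i)) u) * (hs v (xs i))^2)"
    using e by simp
  also have "\<dots> = (\<Prod>i<t. ennreal (if fst (fst (xs i)) then 1 else f (snd (xs i)) u)) * (Lam v t xs)^2"
    unfolding Lam_def by (simp add: prod.distrib prod_power_distrib)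
  also have "(\<Prod>i<t. ennreal (if fst (fst (xs i)) then 1 else f (snd (xs i)) u)) = ennreal (pub_lik f xs t u)"
    unfolding pub_lik_def by (rule prod_ennreal) (use nn u in auto)
  finally show ?thesis .
qed

definition Y :: "nat \<Rightarrow> (nat \<Rightarrow> outcome) \<Rightarrow> ennreal" where
  "Y t xs = (\<integral>\<^sup>+ v. indicator (-{u}) v * (Lam v t xs)^2 \<partial>mu0)"

lemma Z_ge: "min 1 (Y t xs) \<le> Z t xs"
proof (cases "\<exists>v\<in>Om. v \<noteq> u \<and> ennreal (cc v) \<le> (Lam v t xs)^2")
  case True
  then obtain v where v: "v \<in> Om" "v \<noteq> u" "ennreal (cc v) \<le> (Lam v t xs)^2" by blast
  have pv: "0 < pmf mu0 v" using v mu0 by (simp add: pmf_positive)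
  have "(\<integral>\<^sup>+ w. ennreal (cc v) * indicator {v} w \<partial>mu0) \<le> Z t xs"
    unfolding Z_def
    by (intro nn_integral_mono) (use v in \<open>auto split: split_indicator\<close>)
  moreover have "(\<integral>\<^sup>+ w. ennreal (cc v) * indicator {v} w \<partial>mu0) = 1"
    using pv by (simp add: emeasure_pmf_single cc_def ennreal_mult[symmetric])
  ultimately show ?thesis by (simp add: min.coboundedI1)
next
  case False
  have "Z t xs = Y t xs"
    unfolding Z_def Y_def
  proof (intro nn_integral_cong_AE, unfold AE_measure_pmf_iff, intro ballI)
    fix v assume "v \<in> set_pmf mu0"
    then have v: "v \<in> Om" using mu0 by simp
    show "indicator (-{u}) v * min (ennreal (cc v)) ((Lam v t xs)^2) = indicator (-{u}) v * (Lam v t xs)^2"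
      using False v by (cases "v = u") (auto simp: min_def)
  qed
  then show ?thesis by (simp add: min.coboundedI2)
qed

lemma bad_sub:
  assumes G: "\<forall>i. snd (xs i) \<in> S" and e: "0 < e"
    and bad: "e < \<bar>pub_belief mu0 f xs t u - 1\<bar>"
  shows "ennreal (e * pmf mu0 u) \<le> Y t xs"
proof (rule ccontr)
  assume "\<not> ennreal (e * pmf mu0 u) \<le> Y t xs"
  then have Ylt: "Y t xs < ennreal (e * pmf mu0 u)" by simp
  define y where "y = enn2real (Y t xs)"
  have Yy: "Y t xs = ennreal y" unfolding y_def using Ylt
    by (cases "Y t xs") auto
  have y0: "0 \<le> y" unfolding y_def by simp
  have p: "0 < pmf mu0 u" using u mu0 by (simp add: pmf_positive)
  have ylt: "y < e * pmf mu0 u" using Ylt Yy y0 by (simp add: ennreal_less_iff)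
  let ?L = "pub_lik f xs t"
  have Lu: "0 < ?L u" by (rule L_pos[OF G u])
  have "(\<integral>\<^sup>+ v. ennreal (?L v) \<partial>mu0)
      = (\<integral>\<^sup>+ v. ennreal (?L u) * (indicator {u} v + indicator (-{u}) v * (Lam v t xs)^2) \<partial>mu0)"
  proof (intro nn_integral_cong_AE, unfold AE_measure_pmf_iff, intro ballI)
    fix v assume "v \<in> set_pmf mu0"
    then have v: "v \<in> Om" using mu0 by simp
    show "ennreal (?L v) = ennreal (?L u) * (indicator {u} v + indicator (-{u}) v * (Lam v t xs)^2)"
      using L_eq[OF G v] by (cases "v = u") auto
  qed
  also have "\<dots> = ennreal (?L u) * (ennreal (pmf mu0 u) + Y t xs)"
    unfolding Y_def
    by (simp add: nn_integral_cmult nn_integral_add emeasure_pmf_single)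
  also have "\<dots> = ennreal (?L u * (pmf mu0 u + y))"
    using Lu y0 by (simp add: Yy ennreal_mult[symmetric] ennreal_plus[symmetric] del: ennreal_plus)
  finally have Q: "(\<integral>\<^sup>+ v. ennreal (?L v) \<partial>mu0) = ennreal (?L u * (pmf mu0 u + y))" .
  have "integrable mu0 ?L \<and> (\<integral>v. ?L v \<partial>mu0) = ?L u * (pmf mu0 u + y)"
  proof (rule nn_integral_eq_integrable[THEN iffD1, OF _ _ _ Q])
    show "AE x in mu0. 0 \<le> ?L x"
      unfolding AE_measure_pmf_iff using L_pos[OF G] mu0 by (auto intro: less_imp_le)
    show "0 \<le> ?L u * (pmf mu0 u + y)" using Lu y0 by simp
  qed simp
  then have I: "(\<integral>v. ?L v \<partial>mu0) = ?L u * (pmf mu0 u + y)" by simp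
  have B: "pub_belief mu0 f xs t u = pmf mu0 u / (pmf mu0 u + y)"
    unfolding pub_belief_def wbel_def I
    by (subst mult.commute[of "?L u"]) (rule nonzero_mult_divide_mult_cancel_right, use Lu in simp)
  have "\<bar>pmf mu0 u / (pmf mu0 u + y) - 1\<bar> = y / (pmf mu0 u + y)"
    using p y0 by (simp add: field_simps)
  also have "\<dots> \<le> y / pmf mu0 u" using p y0 by (intro divide_left_mono) auto
  also have "\<dots> < e" using ylt p by (simp add: field_simps)
  finally show False using bad B by simp
qed

lemma g_meas[measurable]: "v \<in> Om \<Longrightarrow> (\<lambda>x::outcome. if fst (fst x) then 1 else f (snd x) v) \<in> borel_measurable D"
  by (subst measurable_cong_sets[OF sets_D refl]) measurable

lemma L_meas[measurable]: "v \<in> Om \<Longrightarrow> (\<lambda>xs. pub_lik f xs t v) \<in> borel_measurable P"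
  unfolding pub_lik_def P_def' by measurable

lemma belief_meas: "(\<lambda>xs. pub_belief mu0 f xs t u) \<in> borel_measurable P"
proof -
  interpret R: prob_space R by (rule R_ps)
  have pm: "(\<lambda>(xs, v). pub_lik f xs t v) \<in> borel_measurable (P \<Otimes>\<^sub>M R)"
    by (rule measurable_pair_restrict_pmf2) (auto simp: mu0 Omc)
  have "(\<lambda>xs. \<integral>v. pub_lik f xs t v \<partial>R) \<in> borel_measurable P"
    by (rule R.borel_measurable_lebesgue_integral) (use pm in simp)
  moreover have "(\<integral>v. pub_lik f xs t v \<partial>mu0) = (\<integral>v. pub_lik f xs t v \<partial>R)" for xs
    by (rule integral_pmf_restrict) simp
  ultimately have [measurable]: "(\<lambda>xs. \<integral>v. pub_lik f xs t v \<partial>mu0) \<in> borel_measurable P" by simp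
  show ?thesis unfolding pub_belief_def wbel_def using u by measurable
qed

lemma pub_conv:
  assumes e: "0 < e"
  shows "(\<lambda>t. measure P {xs \<in> space P. \<bar>pub_belief mu0 f xs t u - 1\<bar> > e}) \<longlonglongrightarrow> 0"
proof -
  interpret Pp: prob_space P by (rule P_ps)
  have p: "0 < pmf mu0 u" using u mu0 by (simp add: pmf_positive)
  define b where "b = min 1 (e * pmf mu0 u)"
  have b0: "0 < b" unfolding b_def using e p by simp
  have bY: "ennreal b \<le> Z t xs" if "ennreal (e * pmf mu0 u) \<le> Y t xs" for t xs
  proof -
    have "ennreal b = min 1 (ennreal (e * pmf mu0 u))" unfolding b_def
      using min_ennreal[of 1 "e * pmf mu0 u"] e p by simp
    also have "\<dots> \<le> min 1 (Y t xs)" using that by (rule min.mono[OF order_refl])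
    also have "\<dots> \<le> Z t xs" by (rule Z_ge)
    finally show ?thesis .
  qed
  have bm: "\<And>t. (\<lambda>xs. pub_belief mu0 f xs t u) \<in> borel_measurable P" by (rule belief_meas)
  have le1: "emeasure P {xs \<in> space P. \<bar>pub_belief mu0 f xs t u - 1\<bar> > e}
      \<le> emeasure P {xs \<in> space P. 1 \<le> ennreal (1/b) * Z t xs}" for t
  proof (rule emeasure_mono_AE)
    show "AE xs in P. xs \<in> {xs \<in> space P. \<bar>pub_belief mu0 f xs t u - 1\<bar> > e}
        \<longrightarrow> xs \<in> {xs \<in> space P. 1 \<le> ennreal (1/b) * Z t xs}"
      using AE_G
    proof eventually_elim
      case (elim xs)
      show ?case
      proof
        assume "xs \<in> {xs \<in> space P. \<bar>pub_belief mu0 f xs t u - 1\<bar> > e}"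
        then have xs: "xs \<in> space P" "\<bar>pub_belief mu0 f xs t u - 1\<bar> > e" by auto
        have "ennreal b \<le> Z t xs" by (rule bY[OF bad_sub[OF elim e xs(2)]])
        then have "ennreal (1/b) * ennreal b \<le> ennreal (1/b) * Z t xs" by (rule mult_left_mono) simp
        moreover have "ennreal (1/b) * ennreal b = 1" using b0 by (simp add: ennreal_mult[symmetric])
        ultimately show "xs \<in> {xs \<in> space P. 1 \<le> ennreal (1/b) * Z t xs}" using xs by simp
      qed
    qed
    show "{xs \<in> space P. 1 \<le> ennreal (1/b) * Z t xs} \<in> sets P" by measurable
  qed
  have le2: "emeasure P {xs \<in> space P. 1 \<le> ennreal (1/b) * Z t xs} \<le> ennreal (1/b) * T t" for t
  proof -
    have "emeasure P {xs \<in> space P. 1 \<le> ennreal (1/b) * Z t xs} \<le> ennreal (1/b) * (\<integral>\<^sup>+ xs. Z t xs * indicator (space P) xs \<partial>P)"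
      by (rule nn_integral_Markov_inequality) auto
    also have "(\<integral>\<^sup>+ xs. Z t xs * indicator (space P) xs \<partial>P) = (\<integral>\<^sup>+ xs. Z t xs \<partial>P)"
      by (intro nn_integral_cong) auto
    also have "ennreal (1/b) * \<dots> \<le> ennreal (1/b) * T t" by (intro mult_left_mono EZ) simp
    finally show ?thesis .
  qed
  have lim: "(\<lambda>t. ennreal (1/b) * T t) \<longlonglongrightarrow> ennreal (1/b) * 0"
    by (intro ennreal_tendsto_cmult T_lim) simp
  have "(\<lambda>t. emeasure P {xs \<in> space P. \<bar>pub_belief mu0 f xs t u - 1\<bar> > e}) \<longlonglongrightarrow> 0"
  proof (rule tendsto_sandwich[OF _ _ tendsto_const])
    show "\<forall>\<^sub>F t in sequentially. 0 \<le> emeasure P {xs \<in> space P. \<bar>pub_belief mu0 f xs t u - 1\<bar> > e}" by simp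
    show "\<forall>\<^sub>F t in sequentially. emeasure P {xs \<in> space P. \<bar>pub_belief mu0 f xs t u - 1\<bar> > e} \<le> ennreal (1/b) * T t"
      using le1 le2 order_trans by (intro always_eventually allI) blast
    show "(\<lambda>t. ennreal (1/b) * T t) \<longlonglongrightarrow> 0" using lim by simp
  qed
  then have "(\<lambda>t. enn2real (emeasure P {xs \<in> space P. \<bar>pub_belief mu0 f xs t u - 1\<bar> > e})) \<longlonglongrightarrow> enn2real 0"
    by (intro tendsto_enn2real) auto
  then show ?thesis by (simp add: measure_def)
qed

end


theorem mainTheorem9:
  fixes Om S :: "real set" and f :: "real \<Rightarrow> real \<Rightarrow> real" and q :: real
  assumes "Om \<noteq> {}" and "countable Om" and "bounded Om"
    and "0 < q" and "q < 1"
    and "S \<in> sets lborel"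
    and "\<forall>w\<in>Om. (\<lambda>s. f s w) \<in> borel_measurable lborel"
    and "\<forall>w\<in>Om. \<forall>s\<in>S. 0 < f s w"
    and "\<forall>w\<in>Om. (\<integral>\<^sup>+ s. ennreal (f s w * indicator S s) \<partial>lborel) = 1"
  shows "(private_learning q S f Om \<longrightarrow> public_learning q S f Om) \<and>
         (private_learning q S f Om \<longrightarrow> pairwise_informative S f Om)"
proof -
  have p2: "private_learning q S f Om \<longrightarrow> pairwise_informative S f Om"
    using private_imp_pairwise[OF assms(1,2,4,5,6,7,9)] by blast
  have p1: "private_learning q S f Om \<longrightarrow> public_learning q S f Om"
  proof
    assume "private_learning q S f Om"
    with p2 have pw: "pairwise_informative S f Om" by blast
    show "public_learning q S f Om"
      unfolding public_learning_def
    proof (intro allI impI)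
      fix mu0 :: "real pmf" assume mu0: "set_pmf mu0 = Om"
      show "learns (path_measure q S f) Om (pub_belief mu0 f)"
        unfolding learns_def
      proof (intro ballI conjI allI impI)
        fix w assume w: "w \<in> Om"
        interpret pubsetup q S f Om mu0 w
          by unfold_locales (use assms mu0 w pw in auto)
        fix t show "(\<lambda>xs. pub_belief mu0 f xs t w) \<in> borel_measurable (path_measure q S f w)"
          by (rule belief_meas)
      next
        fix w assume w: "w \<in> Om"
        interpret pubsetup q S f Om mu0 w
          by unfold_locales (use assms mu0 w pw in auto)
        fix e :: real assume "0 < e"
        then show "(\<lambda>t. measure (path_measure q S f w) {xs \<in> space (path_measure q S f w). \<bar>pub_belief mu0 f xs t w - 1\<bar> > e}) \<longlonglongrightarrow> 0"
          by (rule pub_conv)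
      qed
    qed
  qed
  from p1 p2 show ?thesis by blast
qed

end
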